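(* Let $k\ge 1$ and $\ast\in\{\Box,\circ\}$. Let $\mathcal M^\ast_{2k+1,0}\subseteq \mathcal M^\ast_{2k+1}$ be the set of those colorings whose central square $k+1$ is land. Then the map $\mathrm{red}\circ\mathrm{contr}$ is a bijection $\mathcal M^\ast_{2k+1,0}\to\mathcal N_k$.
   Context: Colorings. Each square of a square-tiled surface is colored water or land. Two distinct squares are adjacent if they share an edge after all edge identifications; a set of squares is connected if its induced adjacency graph is connected (empty set counts as connected). (N1): the water is connected. For an interior (non-boundary) vertex $v$, its square-degree is the number of distinct squares having $v$ as a corner. (N2$\Box$): no interior vertex of square-degree $4$ has all incident squares water. (N2$\circ$): no interior vertex of any square-degree has all incident squares water. A $2\times k$ Nurikabe rectangle is a coloring of the $2\times k$ grid (no identifications) with connected water and no $2\times 2$ block of water squares; $\mathcal N_k$ is the set of these. Tile $[0,n]\times[0,1]$ by unit squares $[j-1,j]\times[0,1]$, called square $j$. The $1\times n$ Möbius strip identifies $(x,1)\sim(n-x,0)$ for $x\in[0,n]$ (top edge of square $j$ glued to bottom edge of square $n+1-j$); its boundary is the image of the vertical sides. $\mathcal M^\ast_n$ is the set of colorings of the $1\times n$ Möbius strip satisfying (N1) and (N2$\ast$). Contraction: for a coloring of the $1\times(2k+1)$ Möbius strip, $\mathrm{contr}$ gives the coloring of the $1\times 2k$ Möbius strip obtained by deleting square $k+1$, with square $j\le k$ keeping position $j$ and square $j\ge k+2$ moving to position $j-1$. Rectangular reduction: for a coloring of the $1\times 2k$ Möbius strip, $\mathrm{red}$ gives the coloring of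 the $2\times k$ grid whose column $j$ ($1\le j\le k$) has top square colored as square $j$ and bottom square colored as square $2k+1-j$. *)

theory Defs
  imports Main
begin

text \<open>A coloring is represented by its set of water squares.\<close>

definition sq_connected :: "('a \<Rightarrow> 'a \<Rightarrow> bool) \<Rightarrow> 'a set \<Rightarrow> bool" where
  "sq_connected adj S \<longleftrightarrow>
     (\<forall>a\<in>S. \<forall>b\<in>S. (a, b) \<in> {(x, y). x \<in> S \<and> y \<in> S \<and> adj x y}\<^sup>*)"

datatype rule_kind = Box | Circ

text \<open>Squares 1..n of the 1 x n Moebius strip; j and j+1 share a vertical edge,
  top of j is glued to bottom of n+1-j.\<close>
definition mob_adj :: "nat \<Rightarrow> nat \<Rightarrow> nat \<Rightarrow> bool" where
  "mob_adj n i j \<longleftrightarrow> i \<in> {1..n} \<and> j \<in> {1..n} \<and> i \<noteq> j \<and>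
     (i + 1 = j \<or> j + 1 = i \<or> i + j = n + 1)"

text \<open>Interior vertices are the classes {(x,0),(n-x,1)} for 1 <= x <= n-1;
  the squares incident to such a vertex:\<close>
definition mob_vsq :: "nat \<Rightarrow> nat \<Rightarrow> nat set" where
  "mob_vsq n x = {x, x + 1, n - x, n + 1 - x}"

definition mob_N2 :: "rule_kind \<Rightarrow> nat \<Rightarrow> nat set \<Rightarrow> bool" where
  "mob_N2 s n W \<longleftrightarrow> (\<forall>x\<in>{1..n-1}.
     (s = Circ \<or> card (mob_vsq n x) = 4) \<longrightarrow> \<not> mob_vsq n x \<subseteq> W)"

definition Mob :: "rule_kind \<Rightarrow> nat \<Rightarrow> nat set set" where
  "Mob s n = {W. W \<subseteq> {1..n} \<and> sq_connected (mob_adj n) W \<and> mob_N2 s n W}"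

text \<open>2 x k grid: square (j,r), column j in 1..k, row r in {1,2} (1 = top).\<close>
definition grid_adj :: "nat \<Rightarrow> nat \<times> nat \<Rightarrow> nat \<times> nat \<Rightarrow> bool" where
  "grid_adj k p q \<longleftrightarrow> p \<in> {1..k} \<times> {1,2} \<and> q \<in> {1..k} \<times> {1,2} \<and>
     ((fst p = fst q \<and> snd p \<noteq> snd q) \<or>
      (snd p = snd q \<and> (fst p + 1 = fst q \<or> fst q + 1 = fst p)))"

definition Nurikabe :: "nat \<Rightarrow> (nat \<times> nat) set set" where
  "Nurikabe k = {W. W \<subseteq> {1..k} \<times> {1,2} \<and> sq_connected (grid_adj k) W \<and>
     \<not> (\<exists>j\<in>{1..<k}. {(j,1),(j,2),(j+1,1),(j+1,2)} \<subseteq> W)}"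

definition contr :: "nat \<Rightarrow> nat set \<Rightarrow> nat set" where
  "contr k W = {j \<in> W. j \<le> k} \<union> {j - 1 | j. j \<in> W \<and> k + 2 \<le> j}"

definition red :: "nat \<Rightarrow> nat set \<Rightarrow> (nat \<times> nat) set" where
  "red k W = {(j, 1) | j. j \<in> {1..k} \<and> j \<in> W} \<union>
             {(j, 2) | j. j \<in> {1..k} \<and> 2 * k + 1 - j \<in> W}"

end

theory Submission
  imports Defs
begin

definition phi :: "nat \<Rightarrow> nat \<Rightarrow> nat \<times> nat" where
  "phi k i = (if i \<le> k then (i,1) else (2*k+2-i, 2))"
definition psi :: "nat \<Rightarrow> nat \<times> nat \<Rightarrow> nat" where
  "psi k p = (if snd p = 1 then fst p else 2*k+2 - fst p)"

lemma conn_map: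
  assumes "sq_connected adj S" "\<forall>a\<in>S. \<forall>b\<in>S. adj a b \<longrightarrow> adj' (f a) (f b)"
  shows "sq_connected adj' (f ` S)"
  unfolding sq_connected_def
proof (intro ballI)
  fix x y assume "x \<in> f ` S" "y \<in> f ` S"
  then obtain a b where ab: "a \<in> S" "b \<in> S" "x = f a" "y = f b" by auto
  have "(a,b) \<in> {(x, y). x \<in> S \<and> y \<in> S \<and> adj x y}\<^sup>*" using assms(1) ab unfolding sq_connected_def by blast
  then have "(f a, f b) \<in> {(x, y). x \<in> f ` S \<and> y \<in> f ` S \<and> adj' x y}\<^sup>*"
  proof (induction rule: rtrancl_induct)
    case base then show ?case by simp
  next
    case (step y z)
    then have "(f y, f z) \<in> {(x, y). x \<in> f ` S \<and> y \<in> f ` S \<and> adj' x y}" using assms(2) by auto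
    then show ?case using step by (meson rtrancl.simps)
  qed
  then show "(x, y) \<in> {(x, y). x \<in> f ` S \<and> y \<in> f ` S \<and> adj' x y}\<^sup>*" using ab by simp
qed

lemma contr_hi: "k + 1 \<le> m \<Longrightarrow> m \<in> contr k W \<longleftrightarrow> m + 1 \<in> W"
  unfolding contr_def by force
lemma contr_lo: "m \<le> k \<Longrightarrow> m \<in> contr k W \<longleftrightarrow> m \<in> W"
  unfolding contr_def by auto
lemma red_mem: "(j, r) \<in> red k (contr k W) \<longleftrightarrow>
   j \<in> {1..k} \<and> ((r = 1 \<and> j \<in> W) \<or> (r = 2 \<and> 2*k+2-j \<in> W))"
  unfolding red_def using contr_hi[of k "2*k+1-j" W] contr_lo[of j k W]
  by (auto simp: Suc_diff_le)

lemma red_contr: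
  assumes "W \<subseteq> {1..2*k+1}" "k+1 \<notin> W"
  shows "red k (contr k W) = phi k ` W"
proof (rule set_eqI)
  fix p :: "nat \<times> nat"
  obtain j r where p: "p = (j,r)" by fastforce
  show "p \<in> red k (contr k W) \<longleftrightarrow> p \<in> phi k ` W"
  proof
    assume "p \<in> red k (contr k W)"
    then have "j \<in> {1..k} \<and> ((r = 1 \<and> j \<in> W) \<or> (r = 2 \<and> 2*k+2-j \<in> W))" by (simp add: p red_mem)
    then have h: "j \<in> {1..k}" "(r = 1 \<and> j \<in> W) \<or> (r = 2 \<and> 2*k+2-j \<in> W)" by auto
    show "p \<in> phi k ` W"
    proof (cases "r = 1")
      case True then show ?thesis using h unfolding p
        by (force simp: phi_def image_iff)
    next
      case False
      then have "phi k (2*k+2-j) = (j,r)" "2*k+2-j \<in> W" using h by (auto simp: phi_def)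
      then show ?thesis unfolding p by (metis image_eqI)
    qed
  next
    assume "p \<in> phi k ` W"
    then obtain i where i: "i \<in> W" "p = phi k i" by auto
    then have "i \<in> {1..2*k+1}" "i \<noteq> k+1" using assms by auto
    then show "p \<in> red k (contr k W)" using i unfolding p red_mem
      by (auto simp: phi_def split: if_splits)
  qed
qed

lemma psi_phi: "i \<in> {1..2*k+1} \<Longrightarrow> i \<noteq> k+1 \<Longrightarrow> psi k (phi k i) = i"
  by (auto simp: psi_def phi_def)
lemma phi_psi: "p \<in> {1..k} \<times> {1,2} \<Longrightarrow> phi k (psi k p) = p"
  by (cases p) (auto simp: psi_def phi_def)

lemma adj1: "a \<in> {1..2*k+1} \<Longrightarrow> b \<in> {1..2*k+1} \<Longrightarrow> a \<noteq> k+1 \<Longrightarrow> b \<noteq> k+1 \<Longrightarrow>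
   mob_adj (2*k+1) a b \<Longrightarrow> grid_adj k (phi k a) (phi k b)"
  by (auto simp: mob_adj_def grid_adj_def phi_def)
lemma adj2: "p \<in> {1..k} \<times> {1,2} \<Longrightarrow> q \<in> {1..k} \<times> {1,2} \<Longrightarrow>
   grid_adj k p q \<Longrightarrow> mob_adj (2*k+1) (psi k p) (psi k q)"
  by (cases p; cases q) (auto simp: mob_adj_def grid_adj_def psi_def)


lemma psi_range: "p \<in> {1..k} \<times> {1,2} \<Longrightarrow> psi k p \<in> {1..2*k+1} \<and> psi k p \<noteq> k+1"
  by (cases p) (auto simp: psi_def)
lemma phi_range: "i \<in> {1..2*k+1} \<Longrightarrow> i \<noteq> k+1 \<Longrightarrow> phi k i \<in> {1..k} \<times> {1,2}"
  by (auto simp: phi_def)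

lemma psi_img_props: assumes "V \<subseteq> {1..k} \<times> {1,2}"
  shows "psi k ` V \<subseteq> {1..2*k+1}" "k+1 \<notin> psi k ` V"
proof -
  have h: "\<forall>p\<in>V. psi k p \<in> {1..2*k+1} \<and> psi k p \<noteq> k+1" using assms psi_range by blast
  show "psi k ` V \<subseteq> {1..2*k+1}" using h by (simp add: image_subset_iff)
  show "k+1 \<notin> psi k ` V" using h by (metis imageE)
qed
lemma phi_img_props: assumes "W \<subseteq> {1..2*k+1}" "k+1 \<notin> W"
  shows "phi k ` W \<subseteq> {1..k} \<times> {1,2}"
proof -
  have h: "\<forall>p\<in>W. phi k p \<in> {1..k} \<times> {1,2}" using assms phi_range by blast
  show ?thesis using h by (simp only: image_subset_iff)
qed

lemma mem_phi_img:
  assumes "W \<subseteq> {1..2*k+1}" "k+1 \<notin> W" "p \<in> phi k ` W"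
  shows "psi k p \<in> W"
  using assms psi_phi by (metis image_iff subsetD)

lemma psi_img_phi: "W \<subseteq> {1..2*k+1} \<Longrightarrow> k+1 \<notin> W \<Longrightarrow> psi k ` phi k ` W = W"
proof -
  assume a: "W \<subseteq> {1..2*k+1}" "k+1 \<notin> W"
  have "psi k ` phi k ` W = (psi k \<circ> phi k) ` W" by (simp add: image_comp)
  also have "\<dots> = id ` W" using a by (intro image_cong) (auto intro!: psi_phi)
  finally show ?thesis by simp
qed
lemma phi_img_psi: "V \<subseteq> {1..k} \<times> {1,2} \<Longrightarrow> phi k ` psi k ` V = V"
proof -
  assume a: "V \<subseteq> {1..k} \<times> {1,2}"
  have "phi k ` psi k ` V = (phi k \<circ> psi k) ` V" by (simp add: image_comp)
  also have "\<dots> = id ` V" using a phi_psi by (intro image_cong) auto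
  finally show ?thesis by simp
qed

lemma card_vsq: "1 \<le> j \<Longrightarrow> j < k \<Longrightarrow> card (mob_vsq (2*k+1) j) = 4"
  by (simp add: mob_vsq_def card_insert_if) (intro conjI impI; linarith)

lemma n2_to_nur:
  assumes "W \<subseteq> {1..2*k+1}" "k+1 \<notin> W" "mob_N2 s (2*k+1) W"
  shows "\<not> (\<exists>j\<in>{1..<k}. {(j,1),(j,2),(j+1,1),(j+1,2)} \<subseteq> phi k ` W)"
proof
  assume "\<exists>j\<in>{1..<k}. {(j,1),(j,2),(j+1,1),(j+1,2)} \<subseteq> phi k ` W"
  then obtain j where j: "j \<in> {1..<k}" "{(j,1),(j,2),(j+1,1),(j+1,2)} \<subseteq> phi k ` W" by blast
  have "psi k ` {(j,1),(j,2),(j+1,1),(j+1,2)} \<subseteq> W" using j(2) mem_phi_img[OF assms(1,2)] by blast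
  moreover have "psi k ` {(j,1),(j,2),(j+1,1),(j+1,2)} = mob_vsq (2*k+1) j"
    using j(1) by (auto simp: psi_def mob_vsq_def)
  ultimately have "mob_vsq (2*k+1) j \<subseteq> W" by metis
  moreover have "card (mob_vsq (2*k+1) j) = 4" using j(1) card_vsq by auto
  moreover have "j \<in> {1..2*k+1-1}" using j(1) by auto
  ultimately show False using assms(3) unfolding mob_N2_def by blast
qed

lemma nur_to_n2:
  assumes "V \<subseteq> {1..k} \<times> {1,2}" "\<not> (\<exists>j\<in>{1..<k}. {(j,1),(j,2),(j+1,1),(j+1,2)} \<subseteq> V)"
  shows "mob_N2 s (2*k+1) (psi k ` V)"
  unfolding mob_N2_def
proof (intro ballI impI notI)
  fix x assume x: "x \<in> {1..2*k+1-1}" and sub: "mob_vsq (2*k+1) x \<subseteq> psi k ` V"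
  have nk: "k+1 \<notin> psi k ` V" using psi_img_props[OF assms(1)] by simp
  have bck: "phi k q \<in> V" if "q \<in> psi k ` V" for q
  proof -
    have "phi k q \<in> phi k ` psi k ` V" using that by (rule imageI)
    then show ?thesis by (simp add: phi_img_psi[OF assms(1)])
  qed
  show False
  proof (cases "x = k \<or> x = k+1")
    case True
    then have "k+1 \<in> mob_vsq (2*k+1) x" by (auto simp: mob_vsq_def)
    then show False using sub nk by blast
  next
    case False
    obtain j where j: "j \<in> {1..<k}" and vs: "mob_vsq (2*k+1) x = {j, j+1, 2*k+1-j, 2*k+2-j}"
    proof (cases "x < k")
      case True
      then show ?thesis using x that[of x] by (simp add: mob_vsq_def)
    next
      case c: False
      define j where "j = 2*k+1-x"
      have e: "x = 2*k+1-j" "x+1 = 2*k+2-j" "2*k+1-x = j" "2*k+2-x = j+1" "j \<in> {1..<k}"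
        using x c False unfolding j_def by auto
      have "mob_vsq (2*k+1) x = {j, j+1, 2*k+1-j, 2*k+2-j}"
        unfolding mob_vsq_def using e by auto
      then show ?thesis using that e(5) by blast
    qed
    have p: "phi k j = (j,1)" "phi k (j+1) = (j+1,1)" "phi k (2*k+1-j) = (j+1,2)" "phi k (2*k+2-j) = (j,2)"
      using j by (auto simp: phi_def)
    have "phi k ` {j, j+1, 2*k+1-j, 2*k+2-j} = {(j,1),(j,2),(j+1,1),(j+1,2)}"
      by (simp only: image_insert image_empty p) (simp add: insert_commute)
    moreover have "phi k ` {j, j+1, 2*k+1-j, 2*k+2-j} \<subseteq> V" using sub bck unfolding vs by blast
    ultimately have "{(j,1),(j,2),(j+1,1),(j+1,2)} \<subseteq> V" by simp
    then show False using assms(2) j by blast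
  qed
qed

theorem lemma2p4:
  fixes k :: nat and s :: rule_kind
  assumes "k \<ge> 1"
  shows "bij_betw (red k \<circ> contr k) {W \<in> Mob s (2 * k + 1). k + 1 \<notin> W} (Nurikabe k)"
proof (rule bij_betw_byWitness[where f' = "\<lambda>V. psi k ` V"])
  show "\<forall>a\<in>{W \<in> Mob s (2 * k + 1). k + 1 \<notin> W}. psi k ` (red k \<circ> contr k) a = a"
    by (auto simp: Mob_def red_contr psi_img_phi)
  show "\<forall>a'\<in>Nurikabe k. (red k \<circ> contr k) (psi k ` a') = a'"
  proof
    fix V assume V: "V \<in> Nurikabe k"
    then have V1: "V \<subseteq> {1..k} \<times> {1,2}" by (simp add: Nurikabe_def)
    have "psi k ` V \<subseteq> {1..2*k+1}" "k+1 \<notin> psi k ` V" using psi_img_props[OF V1] by simp_all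
    then show "(red k \<circ> contr k) (psi k ` V) = V" using V1 by (simp add: red_contr phi_img_psi)
  qed
  show "(red k \<circ> contr k) ` {W \<in> Mob s (2 * k + 1). k + 1 \<notin> W} \<subseteq> Nurikabe k"
  proof
    fix V assume "V \<in> (red k \<circ> contr k) ` {W \<in> Mob s (2 * k + 1). k + 1 \<notin> W}"
    then obtain W where W: "W \<subseteq> {1..2*k+1}" "k+1 \<notin> W" "sq_connected (mob_adj (2*k+1)) W"
      "mob_N2 s (2*k+1) W" and VW: "V = phi k ` W"
      by (auto simp: Mob_def red_contr)
    have "V \<subseteq> {1..k} \<times> {1,2}" using phi_img_props[OF W(1,2)] VW by simp
    moreover have "sq_connected (grid_adj k) V" unfolding VW
      by (rule conn_map[OF W(3)]) (use W(1,2) adj1 in blast)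
    moreover have "\<not> (\<exists>j\<in>{1..<k}. {(j,1),(j,2),(j+1,1),(j+1,2)} \<subseteq> V)"
      using n2_to_nur[OF W(1,2,4)] VW by simp
    ultimately show "V \<in> Nurikabe k" by (simp add: Nurikabe_def)
  qed
  show "(\<lambda>V. psi k ` V) ` Nurikabe k \<subseteq> {W \<in> Mob s (2 * k + 1). k + 1 \<notin> W}"
  proof
    fix W assume "W \<in> (\<lambda>V. psi k ` V) ` Nurikabe k"
    then obtain V where V: "V \<subseteq> {1..k} \<times> {1,2}" "sq_connected (grid_adj k) V"
      "\<not> (\<exists>j\<in>{1..<k}. {(j,1),(j,2),(j+1,1),(j+1,2)} \<subseteq> V)" and WV: "W = psi k ` V"
      by (auto simp: Nurikabe_def)
    have "W \<subseteq> {1..2*k+1}" "k+1 \<notin> W" using psi_img_props[OF V(1)] WV by simp_all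
    moreover have "sq_connected (mob_adj (2*k+1)) W" unfolding WV
      by (rule conn_map[OF V(2)]) (use V(1) adj2 in blast)
    moreover have "mob_N2 s (2*k+1) W" using nur_to_n2[OF V(1,3)] WV by simp
    ultimately show "W \<in> {W \<in> Mob s (2 * k + 1). k + 1 \<notin> W}" by (simp add: Mob_def)
  qed
qed

end
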